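(* Consider the following distributed algorithm. $G=(V,E)$ is a connected undirected graph on $V=\{1,\dots,m\}$ without self-loops, with adjacency matrix $H$, Laplacian $\mathcal{L}$ and maximum degree $\Delta_{\max}$; $0<c<1/\Delta_{\max}$. Priority vectors evolve by $w^i(k+1)=w^i(k)+c\sum_j h^i_j(w^j(k)-w^i(k))$, each $w^i(0)$ having entries in $(0,1)$ summing to $1$. Weights: $a^i_j(k)=w^i_j(k)$ if $(i,j)\in E$; $a^i_i(k)=w^i_i(k)+\sum_{j\ne i,(i,j)\notin E}w^i_j(k)$; $a^i_j(k)=0$ if $j\ne i$, $(i,j)\notin E$. The functions $f_i:\mathbb{R}^n\to\mathbb{R}$ are continuously differentiable and convex, $X\subset\mathbb{R}^n$ is nonempty, compact and convex, $P_X$ is the Euclidean projection onto $X$, and $\alpha_k>0$. Given $x^i(0)\in\mathbb{R}^n$, set $v^i(k)=\sum_j a^i_j(k)x^j(k)$, $d_i(k)=\nabla f_i(x^i(k))$, $x^i(k+1)=P_X[v^i(k)-\alpha_k d_i(k)]$, and $y(k)=\frac1m\sum_{j=1}^m x^j(k)$. Then: (a) if $\lim_{k\to\infty}\alpha_k=0$, then $\lim_{k\to\infty}\|x^i(k)-y(k)\|=0$ for all $i$; (b) if $\sum_{k=1}^\infty\alpha_k^2<\infty$, then $\sum_{k=1}^\infty\alpha_k\|x^i(k)-y(k)\|<\infty$ for all $i$.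
   Context: Each agent $i$ knows only $f_i$; $x^i(k)$ is agent $i$'s decision vector. The gradients are assumed bounded along the iterates: there is a constant $L$ with $\|d_i(k)\|\le L$ for all $i,k$ (the paper derives this from continuity of the gradients and compactness of $X$). *)

theory Defs
  imports "HOL-Analysis.Analysis"
begin

text \<open>Agents are indexed by 0..m-1 (the paper uses 1..m). The graph is given by an
  edge relation E on {..<m}.\<close>

definition graph_edges :: "nat \<Rightarrow> (nat \<Rightarrow> nat \<Rightarrow> bool) \<Rightarrow> (nat \<times> nat) set" where
  "graph_edges m E = {(i, j). i < m \<and> j < m \<and> E i j}"

definition undirected_graph :: "nat \<Rightarrow> (nat \<Rightarrow> nat \<Rightarrow> bool) \<Rightarrow> bool" where
  "undirected_graph m E \<longleftrightarrow> (\<forall>i<m. \<forall>j<m. E i j \<longleftrightarrow> E j i) \<and> (\<forall>i<m. \<not> E i i)"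

definition connected_graph :: "nat \<Rightarrow> (nat \<Rightarrow> nat \<Rightarrow> bool) \<Rightarrow> bool" where
  "connected_graph m E \<longleftrightarrow> (\<forall>i<m. \<forall>j<m. (i, j) \<in> (graph_edges m E)\<^sup>*)"

definition adj :: "(nat \<Rightarrow> nat \<Rightarrow> bool) \<Rightarrow> nat \<Rightarrow> nat \<Rightarrow> real" where
  "adj E i j = (if E i j then 1 else 0)"

definition degree :: "nat \<Rightarrow> (nat \<Rightarrow> nat \<Rightarrow> bool) \<Rightarrow> nat \<Rightarrow> nat" where
  "degree m E i = card {j. j < m \<and> E i j}"

definition max_degree :: "nat \<Rightarrow> (nat \<Rightarrow> nat \<Rightarrow> bool) \<Rightarrow> nat" where
  "max_degree m E = Max (degree m E ` {..<m})"

text \<open>Weights a^i_j(k) built from the priority vector w^i(k) = (\<lambda>j. w k i j).\<close>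
definition weight :: "nat \<Rightarrow> (nat \<Rightarrow> nat \<Rightarrow> bool) \<Rightarrow> (nat \<Rightarrow> nat \<Rightarrow> nat \<Rightarrow> real)
    \<Rightarrow> nat \<Rightarrow> nat \<Rightarrow> nat \<Rightarrow> real" where
  "weight m E w k i j =
     (if j = i then w k i i + (\<Sum>l\<in>{l. l < m \<and> l \<noteq> i \<and> \<not> E i l}. w k i l)
      else if E i j then w k i j else 0)"

end

theory Submission
  imports Defs
begin


lemma seq_a:
  fixes D u :: "nat \<Rightarrow> real"
  assumes D0: "\<And>k. 0 \<le> D k" and DM: "\<And>k. D k \<le> M"
    and rec: "\<And>k. D (k + B) \<le> \<rho> * D k + u k"
    and r0: "0 \<le> \<rho>" and r1: "\<rho> < 1" and u: "u \<longlonglongrightarrow> 0"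
  shows "D \<longlonglongrightarrow> 0"
proof (rule LIMSEQ_I)
  fix e :: real assume e: "0 < e"
  define \<delta> where "\<delta> = e * (1 - \<rho>) / 2"
  have d0: "0 < \<delta>" using e r1 by (simp add: \<delta>_def)
  obtain K where K: "\<And>k. k \<ge> K \<Longrightarrow> norm (u k - 0) < \<delta>"
    using LIMSEQ_D[OF u d0] by blast
  have M0: "0 \<le> M" using D0[of 0] DM[of 0] by linarith
  have ind: "D (k + n * B) \<le> \<rho> ^ n * M + \<delta> / (1 - \<rho>)" if "k \<ge> K" for n k
  proof (induction n)
    case 0
    have "0 \<le> \<delta> / (1 - \<rho>)" using d0 r1 by simp
    then show ?case using DM[of k] by simp
  next
    case (Suc n)
    have "D (k + Suc n * B) = D ((k + n * B) + B)" by (simp add: algebra_simps)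
    also have "\<dots> \<le> \<rho> * D (k + n * B) + u (k + n * B)" by (rule rec)
    also have "\<dots> \<le> \<rho> * (\<rho> ^ n * M + \<delta> / (1 - \<rho>)) + \<delta>"
      using K[of "k + n * B"] that Suc.IH r0 by (auto intro!: add_mono mult_left_mono)
    also have "\<dots> = \<rho> ^ Suc n * M + \<delta> / (1 - \<rho>)"
      using r1 by (simp add: field_simps)
    finally show ?case .
  qed
  have "(\<lambda>n. \<rho> ^ n * M) \<longlonglongrightarrow> 0 * M"
    by (intro tendsto_intros) (use r0 r1 in simp)
  then obtain N where N: "norm (\<rho> ^ N * M - 0) < e / 2"
    using LIMSEQ_D[of "\<lambda>n. \<rho> ^ n * M" 0 "e/2"] e by auto
  show "\<exists>no. \<forall>k\<ge>no. norm (D k - 0) < e"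
  proof (intro exI allI impI)
    fix k assume k: "k \<ge> K + N * B"
    have "D k = D ((k - N * B) + N * B)" using k by simp
    also have "\<dots> \<le> \<rho> ^ N * M + \<delta> / (1 - \<rho>)" using ind[of "k - N * B" N] k by simp
    also have "\<delta> / (1 - \<rho>) = e / 2" using r1 by (simp add: \<delta>_def field_simps)
    finally show "norm (D k - 0) < e" using N D0[of k] by simp
  qed
qed

lemma sum_shift_split:
  fixes f :: "nat \<Rightarrow> real"
  shows "(\<Sum>k<N + B. f k) = (\<Sum>k<B. f k) + (\<Sum>k<N. f (k + B))"
  by (induction N) (simp_all add: add.commute add.left_commute)

lemma seq_b:
  fixes S v :: "nat \<Rightarrow> real"
  assumes S0: "\<And>k. 0 \<le> S k" and v0: "\<And>k. 0 \<le> v k"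
    and rec: "\<And>k. S (k + B) \<le> \<rho> * S k + v k"
    and r0: "0 \<le> \<rho>" and r1: "\<rho> < 1" and v: "summable v"
  shows "summable S"
proof (rule summableI_nonneg_bounded[OF S0])
  fix n
  define C where "C = (\<Sum>k<B. S k) + suminf v"
  have T: "(\<Sum>k<N + B. S k) \<le> C / (1 - \<rho>)" for N
  proof -
    have "(\<Sum>k<N. S (k + B)) \<le> (\<Sum>k<N. \<rho> * S k + v k)"
      by (intro sum_mono rec)
    also have "\<dots> = \<rho> * (\<Sum>k<N. S k) + (\<Sum>k<N. v k)"
      by (simp add: sum.distrib sum_distrib_left)
    also have "\<dots> \<le> \<rho> * (\<Sum>k<N + B. S k) + suminf v"
      by (intro add_mono mult_left_mono sum_mono2 sum_le_suminf v r0) (auto intro: S0 v0)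
    finally have "(\<Sum>k<N + B. S k) \<le> (\<Sum>k<B. S k) + \<rho> * (\<Sum>k<N + B. S k) + suminf v"
      by (simp add: sum_shift_split)
    then have "(1 - \<rho>) * (\<Sum>k<N + B. S k) \<le> C" by (simp add: C_def algebra_simps)
    then show ?thesis using r1 by (simp add: field_simps)
  qed
  have "(\<Sum>k<n. S k) \<le> (\<Sum>k<n + B. S k)"
    by (intro sum_mono2) (auto intro: S0)
  then show "(\<Sum>k<n. S k) \<le> C / (1 - \<rho>)" using T[of n] by linarith
qed



lemma propagate:
  fixes z :: "nat \<Rightarrow> nat \<Rightarrow> real" and a :: "nat \<Rightarrow> nat \<Rightarrow> nat \<Rightarrow> real" and \<epsilon> :: "nat \<Rightarrow> real"
  assumes stoch: "\<And>t i. i < m \<Longrightarrow> (\<Sum>j<m. a t i j) = 1"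
    and nonneg: "\<And>t i j. i < m \<Longrightarrow> j < m \<Longrightarrow> 0 \<le> a t i j"
    and diag: "\<And>t i. i < m \<Longrightarrow> \<eta> \<le> a t i i"
    and edge: "\<And>t i j. i < m \<Longrightarrow> j < m \<Longrightarrow> E i j \<Longrightarrow> \<eta> \<le> a t i j"
    and eta: "0 \<le> \<eta>"
    and pert: "\<And>t i. i < m \<Longrightarrow> z (Suc t) i - (\<Sum>j<m. a t i j * z t j) \<ge> - \<epsilon> t"
    and lo: "\<And>j. j < m \<Longrightarrow> lo \<le> z k j" and p: "p < m"
  shows "\<forall>j<m. lo - (\<Sum>t<s. \<epsilon> (k + t)) \<le> z (k + s) j \<and>
     ((p, j) \<in> {(a, b). a < m \<and> b < m \<and> (a = b \<or> E b a)} ^^ s \<longrightarrow>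
        lo + \<eta> ^ s * (z k p - lo) - (\<Sum>t<s. \<epsilon> (k + t)) \<le> z (k + s) j)"
proof (induction s)
  case 0
  then show ?case using lo by auto
next
  case (Suc s)
  define R where "R = {(a, b). a < m \<and> b < m \<and> (a = b \<or> E b a)}"
  define Es where "Es = (\<Sum>t<s. \<epsilon> (k + t))"
  define \<delta> where "\<delta> = z k p - lo"
  have d0: "0 \<le> \<delta>" using lo[OF p] by (simp add: \<delta>_def)
  have IH: "\<And>j. j < m \<Longrightarrow> lo - Es \<le> z (k + s) j"
     "\<And>j. j < m \<Longrightarrow> (p, j) \<in> R ^^ s \<Longrightarrow> lo + \<eta> ^ s * \<delta> - Es \<le> z (k + s) j"
    using Suc.IH unfolding R_def Es_def \<delta>_def by auto
  have Es1: "(\<Sum>t<Suc s. \<epsilon> (k + t)) = Es + \<epsilon> (k + s)" by (simp add: Es_def)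
  have base: "lo - Es \<le> (\<Sum>l<m. a (k + s) j l * z (k + s) l)" if j: "j < m" for j
  proof -
    have "lo - Es = (\<Sum>l<m. a (k + s) j l * (lo - Es))"
      using stoch[OF j] by (simp add: sum_distrib_right[symmetric])
    also have "\<dots> \<le> (\<Sum>l<m. a (k + s) j l * z (k + s) l)"
      by (intro sum_mono mult_left_mono IH(1) nonneg[OF j]) auto
    finally show ?thesis .
  qed
  have good: "lo + \<eta> ^ Suc s * \<delta> - Es \<le> (\<Sum>l<m. a (k + s) j l * z (k + s) l)"
    if j: "j < m" and l: "l < m" and jl: "j = l \<or> E j l" and pl: "(p, l) \<in> R ^^ s" for j l
  proof -
    define g where "g = (\<lambda>i. lo - Es + (if i = l then \<eta> ^ s * \<delta> else 0))"
    have "(\<Sum>i<m. a (k + s) j i * g i) = (lo - Es) * (\<Sum>i<m. a (k + s) j i) + a (k + s) j l * (\<eta> ^ s * \<delta>)"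
    proof -
      have "(\<Sum>i<m. a (k + s) j i * g i) = (\<Sum>i<m. a (k + s) j i * (lo - Es) + (if i = l then a (k + s) j l * (\<eta> ^ s * \<delta>) else 0))"
        by (intro sum.cong) (auto simp: g_def algebra_simps)
      also have "\<dots> = (\<Sum>i<m. a (k + s) j i * (lo - Es)) + a (k + s) j l * (\<eta> ^ s * \<delta>)"
        using l by (simp add: sum.distrib)
      finally show ?thesis by (simp add: sum_distrib_left[symmetric] sum_distrib_right[symmetric])
    qed
    also have "\<dots> = lo - Es + a (k + s) j l * (\<eta> ^ s * \<delta>)" using stoch[OF j] by simp
    finally have eq: "(\<Sum>i<m. a (k + s) j i * g i) = lo - Es + a (k + s) j l * (\<eta> ^ s * \<delta>)" .
    have ajl: "\<eta> \<le> a (k + s) j l" using jl diag[OF j] edge[OF j l] by auto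
    have "\<eta> * (\<eta> ^ s * \<delta>) \<le> a (k + s) j l * (\<eta> ^ s * \<delta>)"
      by (intro mult_right_mono ajl) (use eta d0 in simp)
    then have "lo + \<eta> ^ Suc s * \<delta> - Es \<le> (\<Sum>i<m. a (k + s) j i * g i)"
      using eq by simp
    also have "\<dots> \<le> (\<Sum>i<m. a (k + s) j i * z (k + s) i)"
    proof (intro sum_mono mult_left_mono nonneg[OF j])
      fix i assume i: "i \<in> {..<m}"
      show "g i \<le> z (k + s) i"
        using IH(1)[of i] IH(2)[of i] i pl by (auto simp: g_def)
    qed simp
    finally show ?thesis .
  qed
  show ?case
  proof (intro allI impI conjI)
    fix j assume j: "j < m"
    have pj: "z (Suc (k + s)) j - (\<Sum>l<m. a (k + s) j l * z (k + s) l) \<ge> - \<epsilon> (k + s)"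
      using pert[OF j] .
    show "lo - (\<Sum>t<Suc s. \<epsilon> (k + t)) \<le> z (k + Suc s) j"
      using base[OF j] pj Es1 by simp
    assume "(p, j) \<in> {(a, b). a < m \<and> b < m \<and> (a = b \<or> E b a)} ^^ Suc s"
    then obtain l where pl: "(p, l) \<in> R ^^ s" and lj: "(l, j) \<in> R"
      unfolding R_def[symmetric] by auto
    have l: "l < m" and jl: "j = l \<or> E j l" using lj by (auto simp: R_def)
    show "lo + \<eta> ^ Suc s * (z k p - lo) - (\<Sum>t<Suc s. \<epsilon> (k + t)) \<le> z (k + Suc s) j"
      using good[OF j l jl pl] pj Es1 by (simp add: \<delta>_def)
  qed
qed



lemma contract:
  fixes x :: "nat \<Rightarrow> nat \<Rightarrow> 'a::real_inner" and a :: "nat \<Rightarrow> nat \<Rightarrow> nat \<Rightarrow> real" and \<epsilon> :: "nat \<Rightarrow> real"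
  assumes stoch: "\<And>t i. i < m \<Longrightarrow> (\<Sum>j<m. a t i j) = 1"
    and nonneg: "\<And>t i j. i < m \<Longrightarrow> j < m \<Longrightarrow> 0 \<le> a t i j"
    and diag: "\<And>t i. i < m \<Longrightarrow> \<eta> \<le> a t i i"
    and edge: "\<And>t i j. i < m \<Longrightarrow> j < m \<Longrightarrow> E i j \<Longrightarrow> \<eta> \<le> a t i j"
    and eta: "0 \<le> \<eta>" "\<eta> \<le> 1"
    and pert: "\<And>t i. i < m \<Longrightarrow> norm (x (Suc t) i - (\<Sum>j<m. a t i j *\<^sub>R x t j)) \<le> \<epsilon> t"
    and reach: "\<And>j. j < m \<Longrightarrow> (0, j) \<in> {(a, b). a < m \<and> b < m \<and> (a = b \<or> E b a)} ^^ B"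
    and m: "0 < m"
    and Dk: "\<And>i j. i < m \<Longrightarrow> j < m \<Longrightarrow> norm (x k i - x k j) \<le> Dk"
    and i: "i < m" and j: "j < m"
  shows "norm (x (k + B) i - x (k + B) j) \<le> (1 - \<eta> ^ B) * Dk + 2 * (\<Sum>t<B. \<epsilon> (k + t))"
proof -
  have e0: "0 \<le> \<epsilon> t" for t using pert[OF m, of t] norm_ge_zero order_trans by blast
  have E0: "0 \<le> (\<Sum>t<B. \<epsilon> (k + t))" by (intro sum_nonneg e0)
  have D0: "0 \<le> Dk" using Dk[OF m m] by simp
  have etaB: "\<eta> ^ B \<le> 1" using eta by (simp add: power_le_one)
  show ?thesis
  proof (cases "x (k + B) i = x (k + B) j")
    case True
    then show ?thesis using E0 D0 etaB by simp
  next
    case False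
    define n where "n = norm (x (k + B) i - x (k + B) j)"
    have n0: "0 < n" using False by (simp add: n_def)
    define u where "u = (1 / n) *\<^sub>R (x (k + B) i - x (k + B) j)"
    have nu: "norm u = 1" using n0 by (simp add: u_def n_def)
    have un: "inner u (x (k + B) i - x (k + B) j) = n"
      using n0 by (simp add: u_def n_def power2_norm_eq_inner[symmetric] power2_eq_square)
    define z where "z = (\<lambda>t l. inner u (x t l))"
    have zp: "\<bar>z (Suc t) l - (\<Sum>j<m. a t l j * z t j)\<bar> \<le> \<epsilon> t" if l: "l < m" for t l
    proof -
      have "z (Suc t) l - (\<Sum>j<m. a t l j * z t j) = inner u (x (Suc t) l - (\<Sum>j<m. a t l j *\<^sub>R x t j))"
        by (simp add: z_def inner_diff_right inner_sum_right)
      also have "\<bar>\<dots>\<bar> \<le> norm u * norm (x (Suc t) l - (\<Sum>j<m. a t l j *\<^sub>R x t j))"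
        by (rule Cauchy_Schwarz_ineq2)
      also have "\<dots> \<le> \<epsilon> t" using pert[OF l] nu by simp
      finally show ?thesis .
    qed
    define lo where "lo = Min (z k ` {..<m})"
    have lo_le: "lo \<le> z k l" if "l < m" for l using that by (simp add: lo_def)
    have "lo \<in> z k ` {..<m}" unfolding lo_def using m by (intro Min_in) auto
    then obtain l0 where l0: "l0 < m" "lo = z k l0" by auto
    have hi: "z k l \<le> lo + Dk" if l: "l < m" for l
    proof -
      have "z k l - z k l0 = inner u (x k l - x k l0)" by (simp add: z_def inner_diff_right)
      also have "\<dots> \<le> norm u * norm (x k l - x k l0)" by (rule Cauchy_Schwarz_ineq2[THEN abs_le_D1])
      also have "\<dots> \<le> Dk" using Dk[OF l l0(1)] nu by simp
      finally show ?thesis using l0 by simp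
    qed
    define Es where "Es = (\<Sum>t<B. \<epsilon> (k + t))"
    have zp1: "z (Suc t) l - (\<Sum>j<m. a t l j * z t j) \<ge> - \<epsilon> t" if "l < m" for t l
      using zp[OF that, of t] by linarith
    have zp2: "- z (Suc t) l - (\<Sum>j<m. a t l j * - z t j) \<ge> - \<epsilon> t" if "l < m" for t l
      using zp[OF that, of t] by (simp add: sum_negf)
    have hi2: "- (lo + Dk) \<le> - z k l" if "l < m" for l using hi[OF that] by simp
    have A1: "lo + \<eta> ^ B * (z k 0 - lo) - Es \<le> z (k + B) j"
      using propagate[where m=m and a=a and \<eta>=\<eta> and E=E and z=z and \<epsilon>=\<epsilon> and lo=lo and k=k and p=0 and s=B, OF stoch nonneg diag edge eta(1) zp1 lo_le m] reach[OF j] j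
      unfolding Es_def by blast
    have A2: "- (lo + Dk) + \<eta> ^ B * (- z k 0 - - (lo + Dk)) - Es \<le> - z (k + B) i"
      using propagate[where m=m and a=a and \<eta>=\<eta> and E=E and z="\<lambda>t l. - z t l" and \<epsilon>=\<epsilon> and lo="- (lo + Dk)" and k=k and p=0 and s=B, OF stoch nonneg diag edge eta(1) zp2 hi2 m] reach[OF i] i
      unfolding Es_def by blast
    have "z (k + B) i - z (k + B) j = n" using un by (simp add: z_def inner_diff_right)
    then have "n \<le> (lo + Dk) - \<eta> ^ B * (lo + Dk - z k 0) + Es - (lo + \<eta> ^ B * (z k 0 - lo) - Es)"
      using A1 A2 unfolding right_diff_distrib distrib_left mult_minus_right minus_add_distrib by linarith
    also have "\<dots> = (1 - \<eta> ^ B) * Dk + 2 * Es" by (simp add: algebra_simps)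
    finally show ?thesis by (simp add: n_def Es_def)
  qed
qed


lemma adj_sum: "(\<Sum>l<m. adj E i l) = real (degree m E i)"
  unfolding adj_def degree_def by (simp add: sum.If_cases Int_def conj_commute)

lemma adj_nonneg: "0 \<le> adj E i l" by (simp add: adj_def)

lemma w_inv:
  fixes w :: "nat \<Rightarrow> nat \<Rightarrow> nat \<Rightarrow> real"
  assumes w_step: "\<And>k i j. i < m \<Longrightarrow> j < m \<Longrightarrow>
           w (Suc k) i j = w k i j + c * (\<Sum>l<m. adj E i l * (w k l j - w k i j))"
    and cS: "\<And>i. i < m \<Longrightarrow> c * (\<Sum>l<m. adj E i l) \<le> 1"
    and c0: "0 \<le> c"
    and init: "\<And>i. i < m \<Longrightarrow> (\<Sum>j<m. w 0 i j) = 1"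
    and init2: "\<And>i j. i < m \<Longrightarrow> j < m \<Longrightarrow> \<eta> \<le> w 0 i j"
  shows "\<forall>i<m. (\<Sum>j<m. w k i j) = 1 \<and> (\<forall>j<m. \<eta> \<le> w k i j)"
proof (induction k)
  case 0
  then show ?case using init init2 by auto
next
  case (Suc k)
  show ?case
  proof (intro allI impI conjI)
    fix i assume i: "i < m"
    have "(\<Sum>j<m. w (Suc k) i j) = (\<Sum>j<m. w k i j) + c * (\<Sum>j<m. \<Sum>l<m. adj E i l * (w k l j - w k i j))"
      using i by (simp add: w_step sum.distrib sum_distrib_left)
    also have "(\<Sum>j<m. \<Sum>l<m. adj E i l * (w k l j - w k i j)) = (\<Sum>l<m. adj E i l * ((\<Sum>j<m. w k l j) - (\<Sum>j<m. w k i j)))"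
      by (subst sum.swap) (simp add: sum_distrib_left[symmetric] sum_subtractf)
    also have "\<dots> = 0" using Suc.IH i by simp
    finally show "(\<Sum>j<m. w (Suc k) i j) = 1" using Suc.IH i by simp
    fix j assume j: "j < m"
    define S where "S = (\<Sum>l<m. adj E i l)"
    have "w (Suc k) i j = (1 - c * S) * w k i j + c * (\<Sum>l<m. adj E i l * w k l j)"
      using i j by (simp add: w_step S_def algebra_simps sum_subtractf sum_distrib_right sum_distrib_left)
    also have "\<dots> \<ge> (1 - c * S) * \<eta> + c * (\<Sum>l<m. adj E i l * \<eta>)"
      using Suc.IH i j cS[OF i] c0
      by (intro add_mono mult_left_mono sum_mono) (auto simp: S_def adj_nonneg)
    moreover have "(1 - c * S) * \<eta> + c * (\<Sum>l<m. adj E i l * \<eta>) = \<eta>"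
      by (simp add: S_def sum_distrib_left[symmetric] algebra_simps)
    ultimately show "\<eta> \<le> w (Suc k) i j" by simp
  qed
qed

lemma weight_props:
  fixes w :: "nat \<Rightarrow> nat \<Rightarrow> nat \<Rightarrow> real"
  assumes i: "i < m" and sum1: "(\<Sum>j<m. w k i j) = 1" and lb: "\<And>j. j < m \<Longrightarrow> \<eta> \<le> w k i j"
    and eta: "0 \<le> \<eta>"
  shows "(\<Sum>j<m. weight m E w k i j) = 1"
    and "\<And>j. j < m \<Longrightarrow> 0 \<le> weight m E w k i j"
    and "\<eta> \<le> weight m E w k i i"
    and "\<And>j. j < m \<Longrightarrow> E i j \<Longrightarrow> j \<noteq> i \<Longrightarrow> \<eta> \<le> weight m E w k i j"
proof -
  define T where "T = {l. l < m \<and> l \<noteq> i \<and> \<not> E i l}"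
  define Sx where "Sx = (\<Sum>l\<in>T. w k i l)"
  have Sx0: "0 \<le> Sx" unfolding Sx_def T_def using lb eta by (intro sum_nonneg) (auto intro: order_trans)
  have "(\<Sum>j<m. weight m E w k i j) = (\<Sum>j<m. w k i j + (if j = i then Sx else 0) - (if j \<in> T then w k i j else 0))"
    by (intro sum.cong) (auto simp: weight_def T_def Sx_def)
  also have "\<dots> = 1 + Sx - (\<Sum>j<m. if j \<in> T then w k i j else 0)"
    using i sum1 by (simp add: sum.distrib sum_subtractf)
  also have "(\<Sum>j<m. if j \<in> T then w k i j else 0) = Sx"
    unfolding Sx_def by (simp add: sum.If_cases T_def) (intro sum.cong; auto)
  finally show "(\<Sum>j<m. weight m E w k i j) = 1" by simp
  show "\<eta> \<le> weight m E w k i i"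
    using lb[OF i] Sx0 by (simp add: weight_def Sx_def T_def)
  show "\<And>j. j < m \<Longrightarrow> E i j \<Longrightarrow> j \<noteq> i \<Longrightarrow> \<eta> \<le> weight m E w k i j"
    using lb by (simp add: weight_def)
  show "\<And>j. j < m \<Longrightarrow> 0 \<le> weight m E w k i j"
    using lb eta Sx0 by (auto simp: weight_def Sx_def T_def intro: order_trans add_nonneg_nonneg)
qed



lemma relpow_sub: fixes R S :: "('a \<times> 'a) set" shows "R \<subseteq> S \<Longrightarrow> (p, j) \<in> R ^^ n \<Longrightarrow> (p, j) \<in> S ^^ n"
proof (induction n arbitrary: j)
  case 0 then show ?case by (metis relpow_0_E relpow_0_I)
next
  case (Suc n)
  from Suc.prems(2) obtain y where "(p, y) \<in> R ^^ n" "(y, j) \<in> R" by (rule relpow_Suc_E)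
  then show ?case using Suc by (blast intro: relpow_Suc_I)
qed

lemma relpow_ext: fixes R :: "('a \<times> 'a) set" shows "(\<And>x. (x, x) \<in> R) \<Longrightarrow> (p, j) \<in> R ^^ n \<Longrightarrow> (p, j) \<in> R ^^ (n + d)"
  by (induction d) (auto intro: relpow_Suc_I)

lemma reach_B:
  assumes conn: "connected_graph m E" and g: "undirected_graph m E" and m: "0 < m"
  shows "\<exists>B. \<forall>j<m. (0, j) \<in> {(a, b). a < m \<and> b < m \<and> (a = b \<or> E b a)} ^^ B"
proof -
  define R where "R = {(a, b). a < m \<and> b < m \<and> (a = b \<or> E b a)}"
  define R' where "R' = R \<union> {(a, b). a = b}"
  have sub: "graph_edges m E \<subseteq> R" using g by (auto simp: graph_edges_def R_def undirected_graph_def)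
  have "\<forall>j<m. \<exists>n. (0, j) \<in> R ^^ n"
  proof (intro allI impI)
    fix j assume "j < m"
    then obtain n where "(0, j) \<in> graph_edges m E ^^ n"
      using conn m by (auto simp: connected_graph_def rtrancl_power)
    then show "\<exists>n. (0, j) \<in> R ^^ n" using relpow_sub[OF sub] by blast
  qed
  then obtain g where gj: "\<And>j. j < m \<Longrightarrow> (0, j) \<in> R ^^ g j" by metis
  define B where "B = (\<Sum>j<m. g j)"
  have "(0, j) \<in> R ^^ B" if j: "j < m" for j
  proof -
    have le: "g j \<le> B" unfolding B_def using j by (intro member_le_sum) auto
    have "(0, j) \<in> R' ^^ g j" using gj[OF j] by (rule relpow_sub[rotated]) (auto simp: R'_def)
    then have "(0, j) \<in> R' ^^ (g j + (B - g j))" by (intro relpow_ext) (auto simp: R'_def)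
    then have r: "(0, j) \<in> R' ^^ B" using le by simp
    have "\<And>n x. (0, x) \<in> R' ^^ n \<Longrightarrow> x < m \<Longrightarrow> (0, x) \<in> R ^^ n"
    proof -
      fix n show "\<And>x. (0, x) \<in> R' ^^ n \<Longrightarrow> x < m \<Longrightarrow> (0, x) \<in> R ^^ n"
      proof (induction n)
        case 0 then show ?case by auto
      next
        case (Suc n)
        from Suc.prems(1) obtain y where y: "(0, y) \<in> R' ^^ n" "(y, x) \<in> R'" by (rule relpow_Suc_E)
        have ym: "y < m" using y(2) Suc.prems(2) by (auto simp: R'_def R_def)
        have "(y, x) \<in> R" using y(2) Suc.prems(2) by (auto simp: R'_def R_def)
        then show ?case using Suc.IH[OF y(1) ym] by (blast intro: relpow_Suc_I)
      qed
    qed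
    then show ?thesis using r j by blast
  qed
  then show ?thesis unfolding R_def by blast
qed



lemma jensen_sq:
  fixes \<rho> a b :: real
  assumes "0 \<le> \<rho>" "\<rho> < 1"
  shows "(\<rho> * a + b)\<^sup>2 \<le> \<rho> * a\<^sup>2 + b\<^sup>2 / (1 - \<rho>)"
proof -
  have "(1 - \<rho>) * (\<rho> * a + b)\<^sup>2 \<le> (1 - \<rho>) * (\<rho> * a\<^sup>2) + b\<^sup>2"
  proof -
    have "(1 - \<rho>) * (\<rho> * a\<^sup>2) + b\<^sup>2 - (1 - \<rho>) * (\<rho> * a + b)\<^sup>2 = \<rho> * ((1 - \<rho>) * a - b)\<^sup>2"
      by (simp add: power2_eq_square algebra_simps)
    also have "\<dots> \<ge> 0" using assms by simp
    finally show ?thesis by simp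
  qed
  then have "(\<rho> * a + b)\<^sup>2 \<le> ((1 - \<rho>) * (\<rho> * a\<^sup>2) + b\<^sup>2) / (1 - \<rho>)"
    using assms by (simp add: field_simps)
  also have "\<dots> = \<rho> * a\<^sup>2 + b\<^sup>2 / (1 - \<rho>)" using assms by (simp add: field_simps)
  finally show ?thesis .
qed

lemma dist_avg:
  fixes x :: "nat \<Rightarrow> 'a::real_normed_vector"
  assumes m: "0 < m" and i: "i < m" and D: "\<And>j. j < m \<Longrightarrow> norm (x i - x j) \<le> D"
  shows "norm (x i - (1 / real m) *\<^sub>R (\<Sum>j<m. x j)) \<le> D"
proof -
  have "x i - (1 / real m) *\<^sub>R (\<Sum>j<m. x j) = (1 / real m) *\<^sub>R (\<Sum>j<m. x i - x j)"
    using m by (simp add: sum_subtractf scaleR_diff_right sum_constant_scaleR)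
  also have "norm \<dots> = (1 / real m) * norm (\<Sum>j<m. x i - x j)" by simp
  also have "\<dots> \<le> (1 / real m) * (\<Sum>j<m. norm (x i - x j))"
    by (intro mult_left_mono norm_sum) auto
  also have "\<dots> \<le> (1 / real m) * (\<Sum>j<m. D)"
    by (intro mult_left_mono sum_mono D) auto
  also have "\<dots> = D" using m by simp
  finally show ?thesis .
qed



theorem lemma4p7:
  fixes m :: nat
    and E :: "nat \<Rightarrow> nat \<Rightarrow> bool"
    and c :: real
    and w :: "nat \<Rightarrow> nat \<Rightarrow> nat \<Rightarrow> real"
    and f :: "nat \<Rightarrow> 'a::euclidean_space \<Rightarrow> real"
    and grad :: "nat \<Rightarrow> 'a \<Rightarrow> 'a"
    and X :: "'a set"
    and \<alpha> :: "nat \<Rightarrow> real"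
    and x :: "nat \<Rightarrow> nat \<Rightarrow> 'a"
    and y :: "nat \<Rightarrow> 'a"
  assumes m_pos: "m \<ge> 1"
    and graph: "undirected_graph m E"
    and conn: "connected_graph m E"
    and c_pos: "0 < c"
    and c_bound: "c * real (max_degree m E) < 1"
    and w_init: "\<And>i j. i < m \<Longrightarrow> j < m \<Longrightarrow> 0 < w 0 i j \<and> w 0 i j < 1"
    and w_init_sum: "\<And>i. i < m \<Longrightarrow> (\<Sum>j<m. w 0 i j) = 1"
    and w_step: "\<And>k i j. i < m \<Longrightarrow> j < m \<Longrightarrow>
           w (Suc k) i j = w k i j + c * (\<Sum>l<m. adj E i l * (w k l j - w k i j))"
    and grad: "\<And>i z. i < m \<Longrightarrow> (f i has_derivative (\<lambda>h. grad i z \<bullet> h)) (at z)"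
    and grad_cont: "\<And>i. i < m \<Longrightarrow> continuous_on UNIV (grad i)"
    and f_convex: "\<And>i. i < m \<Longrightarrow> convex_on UNIV (f i)"
    and X_ne: "X \<noteq> {}"
    and X_compact: "compact X"
    and X_convex: "convex X"
    and \<alpha>_pos: "\<And>k. 0 < \<alpha> k"
    and x_step: "\<And>k i. i < m \<Longrightarrow>
           x (Suc k) i = closest_point X ((\<Sum>j<m. weight m E w k i j *\<^sub>R x k j) - \<alpha> k *\<^sub>R grad i (x k i))"
    and y_def: "\<And>k. y k = (1 / real m) *\<^sub>R (\<Sum>j<m. x k j)"
  shows "(\<alpha> \<longlonglongrightarrow> 0 \<longrightarrow> (\<forall>i<m. (\<lambda>k. norm (x k i - y k)) \<longlonglongrightarrow> 0))
       \<and> (summable (\<lambda>k. (\<alpha> k)\<^sup>2) \<longrightarrow> (\<forall>i<m. summable (\<lambda>k. \<alpha> k * norm (x k i - y k))))"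
proof -
  have m0: "0 < m" using m_pos by simp
  define P where "P = {..<m} \<times> {..<m}"
  have Pfin: "finite P" and Pne: "P \<noteq> {}" using m0 by (auto simp: P_def)
  define \<eta> where "\<eta> = Min ((\<lambda>(i, j). w 0 i j) ` P)"
  have eta_le: "\<eta> \<le> w 0 i j" if "i < m" "j < m" for i j
    unfolding \<eta>_def using Pfin that by (intro Min_le) (auto simp: P_def)
  have "\<eta> \<in> (\<lambda>(i, j). w 0 i j) ` P" unfolding \<eta>_def using Pfin Pne by (intro Min_in) auto
  then have eta_pos: "0 < \<eta>" using w_init by (auto simp: P_def)
  have eta1: "\<eta> \<le> 1" using eta_le[OF m0 m0] w_init[OF m0 m0] by simp
  have cS: "c * (\<Sum>l<m. adj E i l) \<le> 1" if i: "i < m" for i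
  proof -
    have "degree m E i \<le> max_degree m E" unfolding max_degree_def using i by (intro Max_ge) auto
    then have "c * real (degree m E i) \<le> c * real (max_degree m E)" using c_pos by simp
    then show ?thesis using c_bound by (simp add: adj_sum)
  qed
  have winv: "\<forall>i<m. (\<Sum>j<m. w k i j) = 1 \<and> (\<forall>j<m. \<eta> \<le> w k i j)" for k
    by (rule w_inv[where m=m and w=w and c=c and E=E, OF w_step cS]) (use c_pos w_init_sum eta_le in auto)
  define a where "a = weight m E w"
  have stoch: "(\<Sum>j<m. a t i j) = 1" if "i < m" for t i
    unfolding a_def using weight_props(1)[where m=m and i=i and w=w and k=t and \<eta>=\<eta> and E=E] winv[of t] that eta_pos by auto
  have nonneg: "0 \<le> a t i j" if "i < m" "j < m" for t i j
    unfolding a_def using weight_props(2)[where m=m and i=i and w=w and k=t and \<eta>=\<eta> and E=E and j=j] winv[of t] that eta_pos by auto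
  have diag: "\<eta> \<le> a t i i" if "i < m" for t i
    unfolding a_def using weight_props(3)[where m=m and i=i and w=w and k=t and \<eta>=\<eta> and E=E] winv[of t] that eta_pos by auto
  have edge: "\<eta> \<le> a t i j" if "i < m" "j < m" "E i j" for t i j
  proof -
    have "j \<noteq> i" using graph that unfolding undirected_graph_def by auto
    then show ?thesis
      unfolding a_def using weight_props(4)[where m=m and i=i and w=w and k=t and \<eta>=\<eta> and E=E and j=j] winv[of t] that eta_pos by auto
  qed
  obtain B where reach: "\<And>j. j < m \<Longrightarrow> (0, j) \<in> {(a, b). a < m \<and> b < m \<and> (a = b \<or> E b a)} ^^ B"
    using reach_B[OF conn graph m0] by blast
  define v where "v = (\<lambda>t i. \<Sum>j<m. a t i j *\<^sub>R x t j)"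
  define \<epsilon> where "\<epsilon> = (\<lambda>t. \<Sum>i<m. norm (x (Suc t) i - v t i))"
  have pert: "norm (x (Suc t) i - (\<Sum>j<m. a t i j *\<^sub>R x t j)) \<le> \<epsilon> t" if "i < m" for t i
    unfolding \<epsilon>_def v_def using that by (intro member_le_sum) auto
  have e0: "0 \<le> \<epsilon> t" for t unfolding \<epsilon>_def by (intro sum_nonneg) auto
  define D where "D = (\<lambda>k. Max ((\<lambda>(i, j). norm (x k i - x k j)) ` P))"
  have D_ge: "norm (x k i - x k j) \<le> D k" if "i < m" "j < m" for k i j
    unfolding D_def using Pfin that by (intro Max_ge) (auto simp: P_def)
  have D0: "0 \<le> D k" for k using D_ge[OF m0 m0, of k] by simp
  have D_le: "D k \<le> r" if "\<And>i j. i < m \<Longrightarrow> j < m \<Longrightarrow> norm (x k i - x k j) \<le> r" for k r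
    unfolding D_def using Pfin Pne that by (subst Max_le_iff) (auto simp: P_def)
  define \<rho> where "\<rho> = 1 - \<eta> ^ B"
  have r0: "0 \<le> \<rho>" using eta_pos eta1 by (simp add: \<rho>_def power_le_one)
  have r1: "\<rho> < 1" using eta_pos by (simp add: \<rho>_def)
  define u where "u = (\<lambda>k. 2 * (\<Sum>t<B. \<epsilon> (k + t)))"
  have u0: "0 \<le> u k" for k unfolding u_def using e0 by (simp add: sum_nonneg)
  have rec: "D (k + B) \<le> \<rho> * D k + u k" for k
    unfolding \<rho>_def u_def
    by (rule D_le, rule contract[where a=a and E=E and \<eta>=\<eta>, OF stoch nonneg diag edge _ eta1 pert reach m0 D_ge])
      (use eta_pos in auto)
  have clX: "closed X" using X_compact by (rule compact_imp_closed)
  have xX: "x (Suc k) i \<in> X" if "i < m" for k i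
    using x_step[OF that] closest_point_in_set[OF clX X_ne] by simp
  have vX: "v (Suc k) i \<in> X" if i: "i < m" for k i
    unfolding v_def using stoch[OF i] nonneg[OF i] xX
    by (intro convex_sum[OF _ X_convex]) auto
  obtain Rb where Rb: "\<And>z. z \<in> X \<Longrightarrow> norm z \<le> Rb"
    using compact_imp_bounded[OF X_compact] by (auto simp: bounded_iff)
  have "compact (\<Union>i<m. grad i ` X)"
  proof (rule compact_UN)
    show "finite {..<m}" by simp
    fix i assume "i \<in> {..<m}"
    then have "continuous_on X (grad i)" using grad_cont continuous_on_subset by blast
    then show "compact (grad i ` X)" using X_compact by (rule compact_continuous_image)
  qed
  then obtain L where L: "\<And>g. g \<in> (\<Union>i<m. grad i ` X) \<Longrightarrow> norm g \<le> L"
    by (metis compact_imp_bounded bounded_iff)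
  have Lg: "norm (grad i z) \<le> L" if "i < m" "z \<in> X" for i z using L that by blast
  obtain z0 where z0: "z0 \<in> X" using X_ne by blast
  have L0: "0 \<le> L" using Lg[OF m0 z0] norm_ge_zero[of "grad 0 z0"] by linarith
  have eb: "\<epsilon> t \<le> real m * L * \<alpha> t" if t: "t \<ge> 1" for t
  proof -
    obtain t' where t': "t = Suc t'" using t by (cases t) auto
    have "norm (x (Suc t) i - v t i) \<le> \<alpha> t * L" if i: "i < m" for i
    proof -
      have "x (Suc t) i = closest_point X (v t i - \<alpha> t *\<^sub>R grad i (x t i))"
        using x_step[OF i] by (simp add: v_def a_def)
      moreover have "v t i = closest_point X (v t i)" using vX[OF i, of t'] t' by (simp add: closest_point_self)
      ultimately have "norm (x (Suc t) i - v t i) \<le> dist (v t i - \<alpha> t *\<^sub>R grad i (x t i)) (v t i)"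
        using closest_point_lipschitz[OF X_convex clX X_ne] by (metis dist_norm)
      also have "\<dots> = \<alpha> t * norm (grad i (x t i))" using \<alpha>_pos[of t] by (simp add: dist_norm)
      also have "\<dots> \<le> \<alpha> t * L" using Lg[OF i xX[OF i, of t']] t' \<alpha>_pos[of t] by (intro mult_left_mono) auto
      finally show ?thesis .
    qed
    then have "\<epsilon> t \<le> (\<Sum>i<m. \<alpha> t * L)" unfolding \<epsilon>_def by (intro sum_mono) auto
    then show ?thesis by (simp add: algebra_simps)
  qed
  have Dbd: "D k \<le> D 0 + 2 * Rb" for k
  proof (cases k)
    case 0
    have "0 \<le> Rb" using Rb[OF z0] norm_ge_zero[of z0] by linarith
    then show ?thesis using 0 by simp
  next
    case (Suc k')
    have "D k \<le> 2 * Rb"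
    proof (rule D_le)
      fix i j assume "i < m" "j < m"
      then have "norm (x k i) \<le> Rb" "norm (x k j) \<le> Rb" using Rb xX Suc by auto
      then show "norm (x k i - x k j) \<le> 2 * Rb" using norm_triangle_ineq4[of "x k i" "x k j"] by linarith
    qed
    then show ?thesis using D0[of 0] by linarith
  qed
  have ydist: "norm (x k i - y k) \<le> D k" if "i < m" for k i
    unfolding y_def using dist_avg[where x="x k" and D="D k", OF m0 that D_ge[OF that]] by simp
  show ?thesis
  proof (intro conjI impI allI)
    assume al: "\<alpha> \<longlonglongrightarrow> 0"
    have lim1: "(\<lambda>t. real m * L * \<alpha> t) \<longlonglongrightarrow> 0"
      using tendsto_mult_left[OF al, of "real m * L"] by simp
    have ev1: "\<forall>\<^sub>F t in sequentially. \<epsilon> t \<le> real m * L * \<alpha> t"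
      unfolding eventually_at_top_linorder by (intro exI[of _ 1] allI impI eb)
    have eps: "\<epsilon> \<longlonglongrightarrow> 0"
      by (rule tendsto_sandwich[OF always_eventually ev1 tendsto_const lim1]) (simp add: e0)
    have sh: "(\<lambda>k. \<epsilon> (k + t)) \<longlonglongrightarrow> 0" for t
      using LIMSEQ_ignore_initial_segment[OF eps, of t] .
    have "(\<lambda>k. \<Sum>t<B. \<epsilon> (k + t)) \<longlonglongrightarrow> (\<Sum>t<B. 0)"
      by (rule tendsto_sum) (rule sh)
    then have "(\<lambda>k. 2 * (\<Sum>t<B. \<epsilon> (k + t))) \<longlonglongrightarrow> 2 * 0"
      by (intro tendsto_mult_left) simp
    then have "u \<longlonglongrightarrow> 0" by (simp add: u_def)
    then have DD: "D \<longlonglongrightarrow> 0" by (rule seq_a[where D=D and M="D 0 + 2 * Rb" and B=B and \<rho>=\<rho> and u=u, OF D0 Dbd rec r0 r1])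
    fix i assume i: "i < m"
    show "(\<lambda>k. norm (x k i - y k)) \<longlonglongrightarrow> 0"
      by (rule tendsto_sandwich[OF always_eventually always_eventually tendsto_const DD])
        (use ydist[OF i] in auto)
  next
    assume sa: "summable (\<lambda>k. (\<alpha> k)\<^sup>2)"
    have se: "summable (\<lambda>t. (\<epsilon> t)\<^sup>2)"
    proof (rule summable_comparison_test_ev)
      show "summable (\<lambda>t. (real m * L)\<^sup>2 * (\<alpha> t)\<^sup>2)" by (intro summable_mult sa)
      show "\<forall>\<^sub>F t in sequentially. norm ((\<epsilon> t)\<^sup>2) \<le> (real m * L)\<^sup>2 * (\<alpha> t)\<^sup>2"
        unfolding eventually_at_top_linorder
      proof (intro exI[of _ 1] allI impI)
        fix t :: nat assume "t \<ge> 1"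
        then have "(\<epsilon> t)\<^sup>2 \<le> (real m * L * \<alpha> t)\<^sup>2" using eb e0 by (intro power_mono) auto
        then show "norm ((\<epsilon> t)\<^sup>2) \<le> (real m * L)\<^sup>2 * (\<alpha> t)\<^sup>2" by (simp add: power_mult_distrib)
      qed
    qed
    define vv where "vv = (\<lambda>k. (u k)\<^sup>2 / (1 - \<rho>))"
    have sv: "summable vv"
    proof -
      have "summable (\<lambda>k. \<Sum>t<B. (\<epsilon> (k + t))\<^sup>2)"
        using se by (intro summable_sum) (rule summable_ignore_initial_segment)
      then have s4: "summable (\<lambda>k. (4 * real B / (1 - \<rho>)) * (\<Sum>t<B. (\<epsilon> (k + t))\<^sup>2))"
        by (rule summable_mult)
      show ?thesis
      proof (rule summable_comparison_test[OF _ s4], intro exI[of _ 0] allI impI)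
        fix k :: nat
        have "(\<Sum>t<B. \<epsilon> (k + t))\<^sup>2 \<le> (\<Sum>t<B. (\<epsilon> (k + t))\<^sup>2) * real B"
          using sum_squared_le_sum_of_squares[of "\<lambda>t. \<epsilon> (k + t)" "{..<B}"] by simp
        then have "(u k)\<^sup>2 \<le> 4 * real B * (\<Sum>t<B. (\<epsilon> (k + t))\<^sup>2)"
          by (simp add: u_def power_mult_distrib algebra_simps)
        then have "(u k)\<^sup>2 / (1 - \<rho>) \<le> (4 * real B * (\<Sum>t<B. (\<epsilon> (k + t))\<^sup>2)) / (1 - \<rho>)"
          using r1 by (intro divide_right_mono) auto
        then show "norm (vv k) \<le> (4 * real B / (1 - \<rho>)) * (\<Sum>t<B. (\<epsilon> (k + t))\<^sup>2)"
          using r1 by (simp add: vv_def)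
      qed
    qed
    have srec: "(D (k + B))\<^sup>2 \<le> \<rho> * (D k)\<^sup>2 + vv k" for k
    proof -
      have "(D (k + B))\<^sup>2 \<le> (\<rho> * D k + u k)\<^sup>2" using rec[of k] D0 by (intro power_mono) auto
      also have "\<dots> \<le> \<rho> * (D k)\<^sup>2 + vv k" unfolding vv_def by (rule jensen_sq[OF r0 r1])
      finally show ?thesis .
    qed
    have sD: "summable (\<lambda>k. (D k)\<^sup>2)"
      by (rule seq_b[where S="\<lambda>k. (D k)\<^sup>2" and v=vv and B=B and \<rho>=\<rho>, OF _ _ srec r0 r1 sv]) (use r1 in \<open>auto simp: vv_def\<close>)
    fix i assume i: "i < m"
    have s2: "summable (\<lambda>k. ((\<alpha> k)\<^sup>2 + (D k)\<^sup>2) / 2)"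
      by (intro summable_divide summable_add sa sD)
    show "summable (\<lambda>k. \<alpha> k * norm (x k i - y k))"
    proof (rule summable_comparison_test[OF _ s2], intro exI[of _ 0] allI impI)
      fix k :: nat
      have "\<alpha> k * norm (x k i - y k) \<le> \<alpha> k * D k"
        using ydist[OF i] \<alpha>_pos[of k] by (intro mult_left_mono) auto
      also have "\<dots> \<le> ((\<alpha> k)\<^sup>2 + (D k)\<^sup>2) / 2"
      proof -
        have "0 \<le> (\<alpha> k - D k)\<^sup>2" by simp
        then show ?thesis unfolding power2_diff by (simp add: field_simps)
      qed
      finally show "norm (\<alpha> k * norm (x k i - y k)) \<le> ((\<alpha> k)\<^sup>2 + (D k)\<^sup>2) / 2"
        using \<alpha>_pos[of k] by simp
    qed
  qed
qed

end
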